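(* Let $a>1$, $d\ge 4$, and let $G$ be generated by the security model $\mathcal{S}(n,a,d)$; let $T_1=\log^{a+1}n$. Then with probability $1-o(1)$: (1) every community (homochromatic set) of $G$ has size $O(\log^{a+1} n)$; and (2) for every $t\ge T_1$, every community at the end of time step $t$ has size $O(\log^{a+1} t)$.
   Context: Security model $\mathcal{S}(n,a,d)$ (homophyly exponent $a$, natural number $d$): start with an initial graph $G_2$ on two nodes, each of which is a seed node with its own distinct color. For $i=3,\dots,n$, given $G_{i-1}$, let $p_i=(\log i)^{-a}$ and create a new node $v$. With probability $p_i$, $v$ receives a brand-new color $c$ and is called the seed node of $c$; then one edge $(v,u)$ is added with $u$ chosen with probability proportional to degrees in $G_{i-1}$, and $d-1$ edges $(v,u_j)$ are added, each $u_j$ chosen uniformly at random among all seed nodes of $G_{i-1}$. Otherwise, $v$ picks a color $c$ uniformly at random among all colors present in $G_{i-1}$, takes color $c$, and $d$ edges $(v,u_j)$ are added, each $u_j$ chosen with probability proportional to degree among the nodes of color $c$ in $G_{i-1}$. The network is $G=G_n$. A homochromatic set is the set of all nodes of one color; here its size is the size of that set (at the end of the construction, or at the end of step $t$). *)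

theory Defs
  imports "HOL-Probability.Probability"
begin

text \<open>State of the security model after some step:
  (colour list, seed-node set, edge multiset). Nodes are 0,...,length col - 1;
  node v has colour col ! v. Edges form a multigraph (multiset of pairs).\<close>

type_synonym sm_state = "nat list \<times> nat set \<times> (nat \<times> nat) multiset"

definition deg_ms :: "(nat \<times> nat) multiset \<Rightarrow> nat multiset" where
  "deg_ms E = image_mset fst E + image_mset snd E"

primrec iid_list :: "nat \<Rightarrow> 'a pmf \<Rightarrow> 'a list pmf" where
  "iid_list 0 p = return_pmf []"
| "iid_list (Suc k) p = do { x \<leftarrow> p; xs \<leftarrow> iid_list k p; return_pmf (x # xs) }"

text \<open>Step i: given G_{i-1}, create node v = i - 1 (0-based).\<close>
definition sm_step :: "real \<Rightarrow> nat \<Rightarrow> nat \<Rightarrow> sm_state \<Rightarrow> sm_state pmf" where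
  "sm_step a d i s = (case s of (col, S, E) \<Rightarrow>
     (let v = length col in
      do { b \<leftarrow> bernoulli_pmf ((ln (real i)) powr (- a));
           if b then do {
             u \<leftarrow> pmf_of_multiset (deg_ms E);
             us \<leftarrow> iid_list (d - 1) (pmf_of_set S);
             return_pmf (col @ [card (set col)], insert v S,
                         E + {#(v, u)#} + mset (map (\<lambda>w. (v, w)) us)) }
           else do {
             c \<leftarrow> pmf_of_set (set col);
             us \<leftarrow> iid_list d (pmf_of_multiset (filter_mset (\<lambda>w. col ! w = c) (deg_ms E)));
             return_pmf (col @ [c], S, E + mset (map (\<lambda>w. (v, w)) us)) } }))"

definition sm_init :: sm_state where
  "sm_init = ([0, 1], {0, 1}, {#(0, 1)#})"

text \<open>sm_graph a d n is the distribution of G_n (for n \<ge> 2).\<close>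
primrec sm_graph :: "real \<Rightarrow> nat \<Rightarrow> nat \<Rightarrow> sm_state pmf" where
  "sm_graph a d 0 = return_pmf sm_init"
| "sm_graph a d (Suc t) =
     (if Suc t \<le> 2 then return_pmf sm_init else sm_graph a d t \<bind> sm_step a d (Suc t))"

text \<open>Size of the homochromatic set of colour c among the first t nodes
  (i.e. at the end of step t, since nodes never change colour).\<close>
definition comm_size_at :: "nat list \<Rightarrow> nat \<Rightarrow> nat \<Rightarrow> nat" where
  "comm_size_at col t c = length (filter (\<lambda>x. x = c) (take t col))"

end

theory Submission
  imports Defs "HOL-Real_Asymp.Real_Asymp"
begin



definition pr :: "real \<Rightarrow> nat \<Rightarrow> real" where
  "pr a i = ln (real i) powr (- a)"

definition colstep :: "real \<Rightarrow> nat \<Rightarrow> nat list \<Rightarrow> nat list pmf" where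
  "colstep a i col = bernoulli_pmf (pr a i) \<bind> (\<lambda>b. if b then return_pmf (col @ [card (set col)])
       else map_pmf (\<lambda>c. col @ [c]) (pmf_of_set (set col)))"

primrec colg :: "real \<Rightarrow> nat \<Rightarrow> nat list pmf" where
  "colg a 0 = return_pmf [0,1]"
| "colg a (Suc t) = (if Suc t \<le> 2 then return_pmf [0,1] else colg a t \<bind> colstep a (Suc t))"

lemma map_fst_iid: "map_pmf f (iid_list k p \<bind> g) = iid_list k p \<bind> (\<lambda>x. map_pmf f (g x))"
  by (simp add: map_bind_pmf)

lemma map_fst_step: "map_pmf fst (sm_step a d i s) = colstep a i (fst s)"
  unfolding sm_step_def colstep_def pr_def
  by (cases s) (auto simp: map_bind_pmf Let_def pmf.map_comp o_def map_pmf_const intro!: bind_pmf_cong, simp add: map_pmf_def)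

lemma map_fst_graph: "map_pmf fst (sm_graph a d n) = colg a n"
proof (induction n)
  case 0 then show ?case by (simp add: sm_init_def)
next
  case (Suc n)
  show ?case
  proof (cases "Suc n \<le> 2")
    case True then show ?thesis by (simp add: sm_init_def)
  next
    case False
    have "map_pmf fst (sm_graph a d (Suc n)) = sm_graph a d n \<bind> (\<lambda>s. colstep a (Suc n) (fst s))"
      using False by (simp add: map_bind_pmf map_fst_step)
    also have "\<dots> = map_pmf fst (sm_graph a d n) \<bind> colstep a (Suc n)"
      by (simp add: bind_map_pmf)
    finally show ?thesis using Suc False by simp
  qed
qed


definition invc :: "nat list \<Rightarrow> bool" where
  "invc col \<longleftrightarrow> (\<exists>k\<ge>2. set col = {0..<k})"

lemma inv_card: "invc col \<Longrightarrow> set col = {0..<card (set col)} \<and> card (set col) \<ge> 2"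
proof -
  assume "invc col"
  then obtain k where k: "k \<ge> 2" "set col = {0..<k}" unfolding invc_def by blast
  then have "card (set col) = k" by simp
  then show ?thesis using k by simp
qed

lemma set_colstep: "col \<noteq> [] \<Longrightarrow> set_pmf (colstep a i col) \<subseteq> insert (col @ [card (set col)]) ((\<lambda>c. col @ [c]) ` set col)"
proof -
  assume ne: "col \<noteq> []"
  have "set_pmf (if b then return_pmf (col @ [card (set col)]) else map_pmf (\<lambda>c. col @ [c]) (pmf_of_set (set col)))
     \<subseteq> insert (col @ [card (set col)]) ((\<lambda>c. col @ [c]) ` set col)" for b
    using ne by (cases b) (auto simp add: set_pmf_of_set)
  then show ?thesis unfolding colstep_def set_bind_pmf by blast
qed

lemma colg_support: "col \<in> set_pmf (colg a n) \<Longrightarrow> length col = max n 2 \<and> invc col"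
proof (induction n arbitrary: col)
  case 0 then show ?case by (auto simp: invc_def)
next
  case (Suc n)
  show ?case
  proof (cases "Suc n \<le> 2")
    case True then show ?thesis using Suc.prems unfolding invc_def by (simp add: max_def) (rule exI[of _ 2], auto)
  next
    case False
    then have "col \<in> set_pmf (colg a n \<bind> colstep a (Suc n))" using Suc.prems by simp
    then obtain c0 where c0: "c0 \<in> set_pmf (colg a n)" and cc: "col \<in> set_pmf (colstep a (Suc n) c0)"
      by (simp only: set_bind_pmf) blast
    have IH: "length c0 = max n 2" "invc c0" using Suc.IH[OF c0] by auto
    then have ne: "c0 \<noteq> []" by auto
    obtain k where k: "k \<ge> 2" "set c0 = {0..<k}" using IH(2) unfolding invc_def by blast
    have ln: "length c0 = n" using IH(1) False by simp
    from set_colstep[OF ne] cc have "col = c0 @ [card (set c0)] \<or> (\<exists>c\<in>set c0. col = c0 @ [c])" by blast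
    then show ?thesis
    proof
      assume cl: "col = c0 @ [card (set c0)]"
      then have "set col = {0..<Suc k}" using k by auto
      moreover have "length col = Suc n" using cl ln by simp
      ultimately show ?thesis using False k unfolding invc_def by (intro conjI) (simp, rule exI[of _ "Suc k"], simp)
    next
      assume "\<exists>c\<in>set c0. col = c0 @ [c]"
      then obtain c where c: "c \<in> set c0" "col = c0 @ [c]" by blast
      then have "set col = set c0" by auto
      moreover have "length col = Suc n" using c ln by simp
      ultimately show ?thesis using False IH(2) unfolding invc_def by simp
    qed
  qed
qed

lemma finite_colstep: "col \<noteq> [] \<Longrightarrow> finite (set_pmf (colstep a i col))"
  by (rule finite_subset[OF set_colstep]) auto

lemma finite_colg: "finite (set_pmf (colg a n))"
proof (induction n)
  case (Suc n)
  have "\<And>c. c \<in> set_pmf (colg a n) \<Longrightarrow> c \<noteq> []" using colg_support by fastforce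
  then show ?case using Suc by (auto intro!: finite_colstep)
qed simp

lemma exp_bind:
  fixes f :: "'b \<Rightarrow> real"
  assumes "finite (set_pmf M)" "\<And>x. x \<in> set_pmf M \<Longrightarrow> finite (set_pmf (N x))"
  shows "measure_pmf.expectation (M \<bind> N) f = measure_pmf.expectation M (\<lambda>x. measure_pmf.expectation (N x) f)"
proof -
  have "measure_pmf.expectation (M \<bind> N) f = (\<Sum>a\<in>set_pmf M. pmf M a *\<^sub>R measure_pmf.expectation (N a) f)"
    by (rule pmf_expectation_bind) (use assms in auto)
  also have "\<dots> = measure_pmf.expectation M (\<lambda>x. measure_pmf.expectation (N x) f)"
    by (subst integral_measure_pmf[OF assms(1)]) auto
  finally show ?thesis .
qed

lemma exp_colstep:
  fixes f :: "nat list \<Rightarrow> real"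
  assumes "col \<noteq> []" "0 \<le> pr a i" "pr a i \<le> 1"
  shows "measure_pmf.expectation (colstep a i col) f =
     pr a i * f (col @ [card (set col)]) + (1 - pr a i) * ((\<Sum>c\<in>set col. f (col @ [c])) / card (set col))"
proof -
  have "measure_pmf.expectation (colstep a i col) f = measure_pmf.expectation (bernoulli_pmf (pr a i))
     (\<lambda>b. measure_pmf.expectation (if b then return_pmf (col @ [card (set col)])
       else map_pmf (\<lambda>c. col @ [c]) (pmf_of_set (set col))) f)"
    unfolding colstep_def
    by (rule exp_bind) (use assms in \<open>auto intro!: finite_subset[of _ "UNIV::bool set"]\<close>)
  also have "\<dots> = pr a i * f (col @ [card (set col)]) + (1 - pr a i) * ((\<Sum>c\<in>set col. f (col @ [c])) / card (set col))"
    using assms by (simp add: integral_pmf_of_set)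
  finally show ?thesis .
qed

lemma take_colg: "2 \<le> t \<Longrightarrow> t \<le> n \<Longrightarrow> map_pmf (take t) (colg a n) = colg a t"
proof (induction n)
  case 0 then show ?case by simp
next
  case (Suc n)
  show ?case
  proof (cases "t = Suc n")
    case True
    have "map_pmf (take t) (colg a (Suc n)) = map_pmf id (colg a (Suc n))"
      by (intro map_pmf_cong refl) (use colg_support[of _ a "Suc n"] True Suc.prems in fastforce)
    then show ?thesis using True by (simp add: pmf.map_id)
  next
    case False
    then have tn: "t \<le> n" "\<not> Suc n \<le> 2" using Suc.prems by auto
    have "map_pmf (take t) (colg a (Suc n)) = colg a n \<bind> (\<lambda>c. map_pmf (take t) (colstep a (Suc n) c))"
      using tn by (simp add: map_bind_pmf)
    also have "\<dots> = colg a n \<bind> (\<lambda>c. return_pmf (take t c))"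
    proof (intro bind_pmf_cong refl)
      fix c assume c: "c \<in> set_pmf (colg a n)"
      then have "length c = n" using colg_support[OF c] tn by auto
      then have "c \<noteq> []" using tn by auto
      have "map_pmf (take t) (colstep a (Suc n) c) = map_pmf (\<lambda>_. take t c) (colstep a (Suc n) c)"
      proof (intro map_pmf_cong refl)
        fix x assume "x \<in> set_pmf (colstep a (Suc n) c)"
        then have "x \<in> insert (c @ [card (set c)]) ((\<lambda>ca. c @ [ca]) ` set c)"
          using set_colstep[OF `c \<noteq> []`] by blast
        then show "take t x = take t c" using `length c = n` tn by auto
      qed
      then show "map_pmf (take t) (colstep a (Suc n) c) = return_pmf (take t c)" by simp
    qed
    also have "\<dots> = map_pmf (take t) (colg a n)" by (simp add: map_pmf_def)
    finally show ?thesis using Suc tn by simp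
  qed
qed




lemma exp_colg_Suc:
  fixes f :: "nat list \<Rightarrow> real"
  assumes "n \<ge> 2"
  shows "measure_pmf.expectation (colg a (Suc n)) f =
    measure_pmf.expectation (colg a n) (\<lambda>col. measure_pmf.expectation (colstep a (Suc n) col) f)"
proof -
  have "colg a (Suc n) = colg a n \<bind> colstep a (Suc n)" using assms by simp
  moreover have "\<And>x. x \<in> set_pmf (colg a n) \<Longrightarrow> finite (set_pmf (colstep a (Suc n) x))"
    using colg_support by (intro finite_colstep) fastforce
  ultimately show ?thesis using exp_bind[OF finite_colg, of a n "colstep a (Suc n)" f] by simp
qed

lemma prob_le_exp:
  fixes f :: "'a \<Rightarrow> real"
  assumes "finite (set_pmf M)" "\<And>x. x \<in> set_pmf M \<Longrightarrow> f x \<ge> 0"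
    "\<And>x. x \<in> set_pmf M \<Longrightarrow> P x \<Longrightarrow> f x \<ge> 1"
  shows "measure_pmf.prob M {x. P x} \<le> measure_pmf.expectation M f"
proof -
  have "measure_pmf.prob M {x. P x} = measure_pmf.expectation M (indicator {x. P x})"
    by simp
  also have "\<dots> \<le> measure_pmf.expectation M f"
    by (intro integral_mono_AE integrable_measure_pmf_finite assms(1))
       (use assms in \<open>auto simp: AE_measure_pmf_iff indicator_def\<close>)
  finally show ?thesis .
qed

lemma pr_bounds:
  assumes "a > 0" "i \<ge> 3"
  shows "0 < pr a i" "pr a i < 1"
proof -
  have "ln (real i) > 1"
  proof -
    have "exp 1 < (3::real)" using e_less_272 by linarith
    then have "exp 1 < real i" using assms by linarith
    then have "ln (exp 1) < ln (real i)" using assms(2) by (subst ln_less_cancel_iff) auto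
    then show ?thesis by simp
  qed
  then show "0 < pr a i" unfolding pr_def by simp
  show "pr a i < 1" unfolding pr_def using assms(1) by (intro powr_less_one \<open>ln (real i) > 1\<close>) simp
qed

lemma K_step:
  assumes "a > 0" "i \<ge> 3" "invc col"
  shows "measure_pmf.expectation (colstep a i col) (\<lambda>c. (1/2::real) ^ card (set c))
     = (1/2) ^ card (set col) * (1 - pr a i / 2)"
proof -
  have ne: "col \<noteq> []" using inv_card[OF assms(3)] by auto
  have K: "set col = {0..<card (set col)}" "card (set col) \<ge> 2" using inv_card[OF assms(3)] by auto
  have notin: "card (set col) \<notin> set col" by (subst K(1)) simp
  have c1: "card (set (col @ [card (set col)])) = Suc (card (set col))" using notin by simp
  have c2: "(\<Sum>c\<in>set col. (1/2::real) ^ card (set (col @ [c]))) = card (set col) * (1/2) ^ card (set col)"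
  proof -
    have "\<And>c. c \<in> set col \<Longrightarrow> set (col @ [c]) = set col" by auto
    then show ?thesis by simp
  qed
  have pb: "0 \<le> pr a i" "pr a i \<le> 1" using pr_bounds[OF assms(1,2)] by auto
  show ?thesis
    unfolding exp_colstep[OF ne pb] c1 c2
    using pb K(2) ne by (simp add: field_simps)
qed

lemma K_exp:
  assumes "a > 0" "s \<ge> 2"
  shows "measure_pmf.expectation (colg a s) (\<lambda>c. (1/2::real) ^ card (set c))
     \<le> (1/4) * exp (- (\<Sum>i=3..s. pr a i) / 2)"
  using assms(2)
proof (induction s rule: dec_induct)
  case base
  then show ?case by (simp add: numeral_2_eq_2)
next
  case (step n)
  have "measure_pmf.expectation (colg a (Suc n)) (\<lambda>c. (1/2::real) ^ card (set c))
    = measure_pmf.expectation (colg a n) (\<lambda>col. (1/2) ^ card (set col) * (1 - pr a (Suc n) / 2))"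
    unfolding exp_colg_Suc[OF step(1)]
    by (intro integral_cong_AE) (use colg_support K_step[OF assms(1)] step(1) in \<open>auto simp: AE_measure_pmf_iff\<close>)
  also have "\<dots> = measure_pmf.expectation (colg a n) (\<lambda>col. (1/2) ^ card (set col)) * (1 - pr a (Suc n) / 2)"
    by simp
  also have "\<dots> \<le> (1/4) * exp (- (\<Sum>i=3..n. pr a i) / 2) * exp (- pr a (Suc n) / 2)"
  proof (rule mult_mono)
    show "1 - pr a (Suc n) / 2 \<le> exp (- pr a (Suc n) / 2)"
      using exp_ge_add_one_self[of "- pr a (Suc n) / 2"] by simp
    show "0 \<le> 1 - pr a (Suc n) / 2" using pr_bounds[OF assms(1), of "Suc n"] step(1) by simp
  qed (use step in auto)
  also have "\<dots> = (1/4) * exp (- (\<Sum>i=3..Suc n. pr a i) / 2)"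
    using step(1) by (simp add: exp_add[symmetric] field_simps)
  finally show ?case .
qed




definition cnt :: "nat \<Rightarrow> nat list \<Rightarrow> nat" where
  "cnt c col = length (filter (\<lambda>x. x = c) col)"

definition S :: "real \<Rightarrow> nat list \<Rightarrow> real" where
  "S q col = (\<Sum>c\<in>set col. q ^ cnt c col)"

definition flag :: "nat \<Rightarrow> (nat \<Rightarrow> real) \<Rightarrow> nat list \<Rightarrow> bool" where
  "flag s0 m col \<longleftrightarrow> (\<forall>r. s0 \<le> r \<and> r \<le> length col \<longrightarrow> m r \<le> real (card (set (take r col))))"

lemma S_nonneg: "q \<ge> 0 \<Longrightarrow> S q col \<ge> 0"
  unfolding S_def by (intro sum_nonneg) auto

lemma S_new: assumes "c \<notin> set col" shows "S q (col @ [c]) = S q col + q"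
proof -
  have "S q (col @ [c]) = (\<Sum>x\<in>insert c (set col). q ^ cnt x (col @ [c]))" unfolding S_def by simp
  also have "\<dots> = q ^ cnt c (col @ [c]) + (\<Sum>x\<in>set col. q ^ cnt x (col @ [c]))"
    using assms by (simp add: sum.insert)
  also have "cnt c (col @ [c]) = 1" using assms unfolding cnt_def
    by (simp add: filter_empty_conv) blast
  also have "(\<Sum>x\<in>set col. q ^ cnt x (col @ [c])) = (\<Sum>x\<in>set col. q ^ cnt x col)"
    by (intro sum.cong refl) (use assms in \<open>auto simp: cnt_def\<close>)
  finally show ?thesis unfolding S_def by simp
qed

lemma S_old: assumes "c \<in> set col" shows "S q (col @ [c]) = S q col + (q - 1) * q ^ cnt c col"
proof -
  have e: "set (col @ [c]) = set col" using assms by auto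
  have "S q (col @ [c]) = (\<Sum>x\<in>set col. q ^ cnt x col + (if x = c then (q - 1) * q ^ cnt c col else 0))"
    unfolding S_def e by (intro sum.cong refl) (auto simp: cnt_def algebra_simps)
  also have "\<dots> = S q col + (q - 1) * q ^ cnt c col"
    unfolding S_def sum.distrib using assms by (simp add: sum.delta)
  finally show ?thesis .
qed

lemma S_avg: "(\<Sum>c\<in>set col. S q (col @ [c])) = card (set col) * S q col + (q - 1) * S q col"
proof -
  have "(\<Sum>c\<in>set col. S q (col @ [c])) = (\<Sum>c\<in>set col. S q col + (q - 1) * q ^ cnt c col)"
    by (intro sum.cong refl) (simp add: S_old)
  also have "\<dots> = card (set col) * S q col + (q - 1) * S q col"
    by (simp add: sum.distrib sum_distrib_left[symmetric] S_def)
  finally show ?thesis .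
qed

lemma flag_prefix: "flag s0 m (col @ [x]) \<Longrightarrow> flag s0 m col"
  unfolding flag_def by auto

lemma step_flag:
  assumes "a > 0" "Suc j \<ge> 3" "invc col" "q \<ge> 1" "flag s0 m col" "\<mu> > 0" "real (card (set col)) \<ge> \<mu>"
  shows "measure_pmf.expectation (colstep a (Suc j) col) (\<lambda>c. if flag s0 m c then S q c else 0)
     \<le> S q col * (1 + (q - 1) / \<mu>) + q"
proof -
  have ne: "col \<noteq> []" using inv_card[OF assms(3)] by auto
  have K: "set col = {0..<card (set col)}" "card (set col) \<ge> 2" using inv_card[OF assms(3)] by auto
  have notin: "card (set col) \<notin> set col" by (subst K(1)) simp
  have pb: "0 \<le> pr a (Suc j)" "pr a (Suc j) \<le> 1" using pr_bounds[OF assms(1,2)] by auto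
  have Sn: "S q col \<ge> 0" using S_nonneg assms(4) by simp
  have "measure_pmf.expectation (colstep a (Suc j) col) (\<lambda>c. if flag s0 m c then S q c else 0)
     \<le> measure_pmf.expectation (colstep a (Suc j) col) (S q)"
    by (intro integral_mono integrable_measure_pmf_finite finite_colstep ne)
       (use S_nonneg assms(4) in auto)
  also have "\<dots> = pr a (Suc j) * (S q col + q) + (1 - pr a (Suc j)) * ((card (set col) * S q col + (q - 1) * S q col) / card (set col))"
    unfolding exp_colstep[OF ne pb] S_new[OF notin] S_avg ..
  also have "\<dots> = S q col + pr a (Suc j) * q + (1 - pr a (Suc j)) * ((q - 1) * S q col / card (set col))"
  proof -
    have "card (set col) \<noteq> 0" using K(2) by linarith
    then have "(card (set col) * S q col + (q - 1) * S q col) / card (set col) = S q col + (q - 1) * S q col / card (set col)"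
      by (simp add: add_divide_distrib)
    then show ?thesis by (simp add: algebra_simps)
  qed
  also have "\<dots> \<le> S q col + q + (q - 1) * S q col / \<mu>"
  proof -
    have "(q - 1) * S q col / card (set col) \<le> (q - 1) * S q col / \<mu>"
      by (intro divide_left_mono) (use assms Sn in auto)
    moreover have "0 \<le> (q - 1) * S q col / card (set col)" using assms Sn by auto
    ultimately have "(1 - pr a (Suc j)) * ((q - 1) * S q col / card (set col)) \<le> (q - 1) * S q col / \<mu>"
      using pb by (meson dual_order.trans mult_left_le_one_le order_refl diff_ge_0_iff_ge le_diff_eq add_increasing2 mult_left_mono)
    moreover have "pr a (Suc j) * q \<le> q" using pb assms(4) by (simp add: mult_left_le_one_le)
    ultimately show ?thesis by linarith
  qed
  also have "\<dots> = S q col * (1 + (q - 1) / \<mu>) + q" by (simp add: field_simps)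
  finally show ?thesis .
qed

lemma step_noflag:
  assumes "invc col" "\<not> flag s0 m col"
  shows "measure_pmf.expectation (colstep a (Suc j) col) (\<lambda>c. if flag s0 m c then S q c else 0) = 0"
proof -
  have ne: "col \<noteq> []" using inv_card[OF assms(1)] by auto
  have "measure_pmf.expectation (colstep a (Suc j) col) (\<lambda>c. if flag s0 m c then S q c else 0)
      = measure_pmf.expectation (colstep a (Suc j) col) (\<lambda>c. 0)"
  proof (intro integral_cong_AE)
    show "AE x in measure_pmf (colstep a (Suc j) col). (if flag s0 m x then S q x else 0) = 0"
    proof (unfold AE_measure_pmf_iff, intro ballI)
      fix x assume "x \<in> set_pmf (colstep a (Suc j) col)"
      then have "x \<in> insert (col @ [card (set col)]) ((\<lambda>c. col @ [c]) ` set col)"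
        using set_colstep[OF ne] by blast
      then have "\<not> flag s0 m x" using assms(2) flag_prefix by blast
      then show "(if flag s0 m x then S q x else 0) = 0" by simp
    qed
  qed auto
  then show ?thesis by simp
qed




lemma S_init: "S q [0,1] = 2 * q"
  by (simp add: S_def cnt_def)

lemma potential:
  fixes \<mu> :: "nat \<Rightarrow> real"
  assumes a: "a > 0" and q: "q \<ge> 1" and mu: "\<And>r. \<mu> r > 0"
    and muK: "\<And>col. invc col \<Longrightarrow> flag s0 m col \<Longrightarrow> \<mu> (length col) \<le> real (card (set col))"
    and j: "2 \<le> j" "j \<le> t"
  shows "measure_pmf.expectation (colg a j) (\<lambda>c. if flag s0 m c then S q c else 0) *
           (\<Prod>r\<in>{j..<t}. 1 + (q - 1) / \<mu> r)
       \<le> real j * q * (\<Prod>r\<in>{2..<t}. 1 + (q - 1) / \<mu> r)"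
  using j
proof (induction j rule: dec_induct)
  case base
  have V: "(\<Prod>r\<in>{2..<t}. 1 + (q - 1) / \<mu> r) \<ge> 0"
    by (intro prod_nonneg) (use q mu in \<open>auto intro!: add_nonneg_nonneg divide_nonneg_pos\<close>)
  have "measure_pmf.expectation (colg a 2) (\<lambda>c. if flag s0 m c then S q c else 0) \<le> 2 * q"
    using S_init[of q] q by (simp add: numeral_2_eq_2)
  then show ?case using V by (simp add: mult_right_mono)
next
  case (step n)
  let ?V = "\<lambda>j. (\<Prod>r\<in>{j..<t}. 1 + (q - 1) / \<mu> r)"
  let ?f = "\<lambda>c. if flag s0 m c then S q c else 0"
  have fac: "1 \<le> 1 + (q - 1) / \<mu> r" for r using q mu[of r] by simp
  have Vn: "?V n = (1 + (q - 1) / \<mu> n) * ?V (Suc n)"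
    using step by (simp add: prod.atLeast_Suc_lessThan)
  have Vnn: "?V (Suc n) \<ge> 0" by (intro prod_nonneg) (use fac in \<open>auto intro: order_trans[OF zero_le_one]\<close>)
  have V2: "?V (Suc n) \<le> ?V 2"
    by (intro prod_mono2) (use step fac in \<open>auto intro: order_trans[OF zero_le_one]\<close>)
  have pt: "measure_pmf.expectation (colstep a (Suc n) col) ?f \<le> ?f col * (1 + (q - 1) / \<mu> n) + q"
    if col: "col \<in> set_pmf (colg a n)" for col
  proof -
    have ln: "length col = n" "invc col" using colg_support[OF col] step by auto
    show ?thesis
    proof (cases "flag s0 m col")
      case True
      have "3 \<le> Suc n" using step by simp
      from step_flag[OF a this ln(2) q True mu muK[OF ln(2) True]]
      show ?thesis using True ln by simp
    next
      case False
      show ?thesis using step_noflag[OF ln(2) False] q False by simp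
    qed
  qed
  have "measure_pmf.expectation (colg a (Suc n)) ?f
      = measure_pmf.expectation (colg a n) (\<lambda>col. measure_pmf.expectation (colstep a (Suc n) col) ?f)"
    using exp_colg_Suc step by simp
  also have "\<dots> \<le> measure_pmf.expectation (colg a n) (\<lambda>col. ?f col * (1 + (q - 1) / \<mu> n) + q)"
    by (intro integral_mono_AE integrable_measure_pmf_finite finite_colg)
       (use pt in \<open>auto simp: AE_measure_pmf_iff\<close>)
  also have "\<dots> = measure_pmf.expectation (colg a n) ?f * (1 + (q - 1) / \<mu> n) + q"
    by (simp add: integrable_measure_pmf_finite finite_colg)
  finally have E: "measure_pmf.expectation (colg a (Suc n)) ?f \<le> measure_pmf.expectation (colg a n) ?f * (1 + (q - 1) / \<mu> n) + q" .
  have "measure_pmf.expectation (colg a (Suc n)) ?f * ?V (Suc n)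
      \<le> (measure_pmf.expectation (colg a n) ?f * (1 + (q - 1) / \<mu> n) + q) * ?V (Suc n)"
    using E Vnn by (rule mult_right_mono)
  also have "\<dots> = measure_pmf.expectation (colg a n) ?f * ?V n + q * ?V (Suc n)"
    unfolding Vn by (simp add: algebra_simps)
  also have "\<dots> \<le> real n * q * ?V 2 + q * ?V 2"
    using step.IH step.prems V2 q by (intro add_mono mult_left_mono) auto
  also have "\<dots> = real (Suc n) * q * ?V 2" by (simp add: algebra_simps)
  finally show ?case .
qed




lemma ln_step_ge: assumes "x > 0" shows "1 / (x + 1) \<le> ln (x + 1) - ln (x::real)"
proof -
  have "ln (x / (x + 1)) \<le> x / (x + 1) - 1" using assms by (intro ln_le_minus_one) auto
  also have "x / (x + 1) - 1 = - (1 / (x + 1))" using assms by (simp add: field_simps)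
  finally show ?thesis using assms by (simp add: ln_div)
qed

lemma harm_aux: "t \<ge> 4 \<Longrightarrow> (\<Sum>r\<in>{3..<t}. 1 / (real r - 2)) \<le> 1 + ln (real t - 3)"
proof (induction t rule: dec_induct)
  case base
  then show ?case by (simp add: numeral_eq_Suc)
next
  case (step n)
  have "(\<Sum>r\<in>{3..<Suc n}. 1 / (real r - 2)) = (\<Sum>r\<in>{3..<n}. 1 / (real r - 2)) + 1 / (real n - 2)"
    using step by simp
  also have "\<dots> \<le> 1 + ln (real n - 3) + (ln ((real n - 3) + 1) - ln (real n - 3))"
    using step.IH ln_step_ge[of "real n - 3"] step(1) by (simp add: algebra_simps)
  also have "\<dots> = 1 + ln (real (Suc n) - 3)" by (simp add: algebra_simps)
  finally show ?case .
qed

lemma harm_bound: "t \<ge> 3 \<Longrightarrow> (\<Sum>r\<in>{3..<t}. 1 / (real r - 2)) \<le> 1 + ln (real t)"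
proof (cases "t = 3")
  case True then show ?thesis by simp
next
  case False
  assume "t \<ge> 3"
  then have "t \<ge> 4" using False by simp
  then have "ln (real t - 3) \<le> ln (real t)" by (subst ln_le_cancel_iff) auto
  then show ?thesis using harm_aux[OF \<open>t \<ge> 4\<close>] by simp
qed

lemma pr_lower:
  assumes "a > 0" "3 \<le> i" "i \<le> t"
  shows "pr a i \<ge> 1 / (ln (real t) powr a)"
proof -
  have li: "ln (real i) > 0" using assms by simp
  have "ln (real i) \<le> ln (real t)" using assms by (subst ln_le_cancel_iff) auto
  then have "ln (real t) powr (- a) \<le> ln (real i) powr (- a)"
    using assms li by (intro powr_mono2') auto
  then show ?thesis unfolding pr_def by (simp add: powr_minus_divide)
qed

lemma K_tail:
  assumes a: "a > 0" and r: "3 \<le> r" "r \<le> t" and A: "A = ln (real t) powr a"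
  shows "2 powr ((real r - 2) / (4 * A)) * measure_pmf.expectation (colg a r) (\<lambda>c. (1/2::real) ^ card (set c))
     \<le> exp (- ((real r - 2) / (4 * A)))"
proof -
  have Apos: "A > 0" using A r by simp
  have "(real r - 2) * (1 / A) \<le> (\<Sum>i=3..r. pr a i)"
  proof -
    have "real (card {3..r}) * (1 / A) \<le> (\<Sum>i=3..r. pr a i)"
      by (rule sum_bounded_below) (use pr_lower[OF a] r A in auto)
    moreover have "real (card {3..r}) = real r - 2" using r by simp
    ultimately show ?thesis by simp
  qed
  then have sb: "(real r - 2) / A \<le> (\<Sum>i=3..r. pr a i)" by simp
  have E: "measure_pmf.expectation (colg a r) (\<lambda>c. (1/2::real) ^ card (set c)) \<le> (1/4) * exp (- ((real r - 2) / A) / 2)"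
  proof -
    have "- (\<Sum>i=3..r. pr a i) / 2 \<le> - ((real r - 2) / A) / 2"
    proof -
      have "(real r - 2) / A / 2 \<le> (\<Sum>i=3..r. pr a i) / 2" using divide_right_mono[OF sb, of 2] by simp
      then show ?thesis by (simp only: minus_divide_left[symmetric] neg_le_iff_le)
    qed
    then have "exp (- (\<Sum>i=3..r. pr a i) / 2) \<le> exp (- ((real r - 2) / A) / 2)"
      by (simp only: exp_le_cancel_iff)
    then show ?thesis using K_exp[OF a, of r] r by linarith
  qed
  define x where "x = (real r - 2) / (4 * A)"
  have x0: "x \<ge> 0" unfolding x_def using r Apos by simp
  have e2: "(real r - 2) / A / 2 = 2 * x" unfolding x_def using Apos by (simp add: field_simps)
  have "2 powr x * measure_pmf.expectation (colg a r) (\<lambda>c. (1/2::real) ^ card (set c)) \<le> exp (x * ln 2) * ((1/4) * exp (- (2 * x)))"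
    using E e2 by (simp add: powr_def mult_left_mono)
  also have "\<dots> \<le> exp (- x)"
  proof -
    have "ln (2::real) \<le> 1" using ln_le_minus_one[of 2] by simp
    then have "x * ln 2 \<le> x" using x0 by (simp add: mult_left_le)
    then have "exp (x * ln 2) * exp (- (2 * x)) \<le> exp (- x)"
      by (simp add: exp_add[symmetric])
    moreover have "exp (x * ln 2) * ((1/4) * exp (- (2 * x))) = (1/4) * (exp (x * ln 2) * exp (- (2 * x)))" by simp
    moreover have "exp (- x) \<ge> 0" by simp
    ultimately show ?thesis by linarith
  qed
  finally show ?thesis unfolding x_def .
qed




lemma bad_t:
  assumes a: "a > 0" and L2: "ln (real t) \<ge> 2" and A2: "ln (real t) powr a \<ge> 2"
  shows "measure_pmf.prob (colg a t) {col. \<exists>c\<in>set col. 40 * (ln (real t) powr (a + 1)) < real (cnt c col)}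
           \<le> 2 * exp (- 3 * ln (real t))"
proof -
  define L where "L = ln (real t)"
  define A where "A = L powr a"
  define q where "q = 1 + 1 / A"
  define s0 where "s0 = nat \<lceil>16 * L * A\<rceil> + 3"
  define m where "m = (\<lambda>r::nat. (real r - 2) / (4 * A))"
  define \<mu> where "\<mu> = (\<lambda>r::nat. if r < s0 then 2 else m r)"
  define T where "T = q powr (40 * L * A)"
  define f where "f = (\<lambda>col. if flag s0 m col then S q col else 0)"
  define G where "G = (\<lambda>col. (\<Sum>r\<in>{s0..t}. 2 powr m r * (1/2::real) ^ card (set (take r col))) + f col / T)"
  have L0: "L \<ge> 2" using L2 unfolding L_def .
  have A0: "A \<ge> 2" using A2 unfolding A_def L_def .
  have tpos: "real t > 0" using L2 by (cases "t = 0") auto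
  have tL: "real t = exp L" unfolding L_def using tpos by simp
  have t3: "t \<ge> 3"
  proof -
    have "exp L \<ge> 1 + L" by (rule exp_ge_add_one_self)
    then show ?thesis using tL L0 by linarith
  qed
  have LA: "ln (real t) powr (a + 1) = L * A"
    unfolding A_def L_def using L0 by (simp add: powr_add L_def)
  have q1: "q \<ge> 1" "q \<le> 2" unfolding q_def using A0 by auto
  have s03: "s0 \<ge> 3" unfolding s0_def by simp
  have s0le: "real s0 \<le> 16 * L * A + 4"
  proof -
    have "16 * L * A \<ge> 0" using L0 A0 by simp
    then have "real (nat \<lceil>16 * L * A\<rceil>) \<le> 16 * L * A + 1" by linarith
    then show ?thesis unfolding s0_def by simp
  qed
  have mpos: "m r > 0" if "r \<ge> 3" for r unfolding m_def using that A0 by simp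
  have mupos: "\<mu> r > 0" for r unfolding \<mu>_def using mpos s03 by auto
  have Tpos: "T > 0" unfolding T_def using q1 by simp
  have fnn: "f col \<ge> 0" for col unfolding f_def using S_nonneg[of q col] q1 by auto

  have step1: "measure_pmf.prob (colg a t) {col. \<exists>c\<in>set col. 40 * (ln (real t) powr (a + 1)) < real (cnt c col)}
      \<le> measure_pmf.expectation (colg a t) G"
  proof (rule prob_le_exp[OF finite_colg])
    fix col
    show "G col \<ge> 0" unfolding G_def using fnn Tpos
      by (intro add_nonneg_nonneg sum_nonneg divide_nonneg_pos) auto
  next
    fix col assume col: "col \<in> set_pmf (colg a t)" and bad: "\<exists>c\<in>set col. 40 * (ln (real t) powr (a + 1)) < real (cnt c col)"
    have lc: "length col = t" "invc col" using colg_support[OF col] t3 by auto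
    obtain c where c: "c \<in> set col" "40 * (L * A) < real (cnt c col)" using bad LA by auto
    have sumnn: "(\<Sum>r\<in>{s0..t}. 2 powr m r * (1/2::real) ^ card (set (take r col))) \<ge> 0"
      by (intro sum_nonneg) auto
    show "G col \<ge> 1"
    proof (cases "flag s0 m col")
      case True
      have "T \<le> q powr real (cnt c col)" unfolding T_def
        by (rule powr_mono) (use c q1 in auto)
      also have "\<dots> = q ^ cnt c col" using q1 by (simp add: powr_realpow)
      also have "\<dots> \<le> S q col" unfolding S_def
        by (rule member_le_sum) (use c q1 in auto)
      finally have "1 \<le> f col / T" unfolding f_def using True Tpos by simp
      then show ?thesis unfolding G_def using sumnn by linarith
    next
      case False
      then obtain r where r: "s0 \<le> r" "r \<le> t" "real (card (set (take r col))) < m r"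
        unfolding flag_def using lc by auto
      have "1 \<le> 2 powr (m r - real (card (set (take r col))))"
        using r by (intro ge_one_powr_ge_zero) auto
      also have "\<dots> = 2 powr m r * (1/2::real) ^ card (set (take r col))"
      proof -
        have e1: "2 powr (m r - real (card (set (take r col)))) = 2 powr m r / 2 powr real (card (set (take r col)))"
          by (rule powr_diff)
        have e2: "2 powr real (card (set (take r col))) = (2::real) ^ (card (set (take r col)))"
          by (rule powr_realpow) simp
        have e3: "(1/2::real) ^ (card (set (take r col))) = 1 / 2 ^ (card (set (take r col)))"
          by (rule power_one_over)
        show ?thesis unfolding e1 e2 e3 by simp
      qed
      also have "\<dots> \<le> (\<Sum>r\<in>{s0..t}. 2 powr m r * (1/2::real) ^ card (set (take r col)))"
        by (rule member_le_sum[where f = "\<lambda>r. 2 powr m r * (1/2::real) ^ card (set (take r col))"]) (use r in auto)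
      moreover have "f col / T \<ge> 0" using fnn[of col] Tpos by simp
      ultimately show ?thesis unfolding G_def by linarith
    qed
  qed
  have int: "integrable (measure_pmf (colg a t)) h" for h :: "nat list \<Rightarrow> real"
    by (rule integrable_measure_pmf_finite[OF finite_colg])
  have tk: "measure_pmf.expectation (colg a t) (\<lambda>col. (1/2::real) ^ card (set (take r col)))
      = measure_pmf.expectation (colg a r) (\<lambda>col. (1/2::real) ^ card (set col))" if "2 \<le> r" "r \<le> t" for r
  proof -
    have "measure_pmf.expectation (colg a r) (\<lambda>col. (1/2::real) ^ card (set col))
      = measure_pmf.expectation (map_pmf (take r) (colg a t)) (\<lambda>col. (1/2::real) ^ card (set col))"
      using take_colg[OF that] by simp
    then show ?thesis by simp
  qed
  have step2: "measure_pmf.expectation (colg a t) G =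
     (\<Sum>r\<in>{s0..t}. 2 powr m r * measure_pmf.expectation (colg a r) (\<lambda>col. (1/2::real) ^ card (set col)))
     + measure_pmf.expectation (colg a t) f / T"
  proof -
    have "measure_pmf.expectation (colg a t) G =
      measure_pmf.expectation (colg a t) (\<lambda>col. \<Sum>r\<in>{s0..t}. 2 powr m r * (1/2::real) ^ card (set (take r col)))
      + measure_pmf.expectation (colg a t) (\<lambda>col. f col / T)"
      unfolding G_def by (rule Bochner_Integration.integral_add[OF int int])
    also have "measure_pmf.expectation (colg a t) (\<lambda>col. \<Sum>r\<in>{s0..t}. 2 powr m r * (1/2::real) ^ card (set (take r col)))
       = (\<Sum>r\<in>{s0..t}. measure_pmf.expectation (colg a t) (\<lambda>col. 2 powr m r * (1/2::real) ^ card (set (take r col))))"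
      by (rule Bochner_Integration.integral_sum) (rule int)
    also have "\<dots> = (\<Sum>r\<in>{s0..t}. 2 powr m r * measure_pmf.expectation (colg a r) (\<lambda>col. (1/2::real) ^ card (set col)))"
    proof (rule sum.cong[OF refl])
      fix r assume r: "r \<in> {s0..t}"
      then have "2 \<le> r" "r \<le> t" using s03 by auto
      then show "measure_pmf.expectation (colg a t) (\<lambda>col. 2 powr m r * (1/2::real) ^ card (set (take r col)))
         = 2 powr m r * measure_pmf.expectation (colg a r) (\<lambda>col. (1/2::real) ^ card (set col))"
        using tk[of r] by (simp add: int)
    qed
    also have "measure_pmf.expectation (colg a t) (\<lambda>col. f col / T) = measure_pmf.expectation (colg a t) f / T"
      by (rule integral_divide_zero)
    finally show ?thesis .
  qed

  have step3: "(\<Sum>r\<in>{s0..t}. 2 powr m r * measure_pmf.expectation (colg a r) (\<lambda>col. (1/2::real) ^ card (set col)))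
     \<le> exp (- 3 * L)"
  proof -
    have "(\<Sum>r\<in>{s0..t}. 2 powr m r * measure_pmf.expectation (colg a r) (\<lambda>col. (1/2::real) ^ card (set col)))
       \<le> (\<Sum>r\<in>{s0..t}. exp (- 4 * L))"
    proof (rule sum_mono)
      fix r assume r: "r \<in> {s0..t}"
      then have r3: "3 \<le> r" "r \<le> t" using s03 by auto
      have "2 powr m r * measure_pmf.expectation (colg a r) (\<lambda>col. (1/2::real) ^ card (set col)) \<le> exp (- m r)"
        using K_tail[OF a r3, of A] unfolding m_def A_def L_def by simp
      also have "\<dots> \<le> exp (- 4 * L)"
      proof -
        have "16 * L * A \<le> real s0 - 3" unfolding s0_def by linarith
        then have "16 * L * A \<le> real r - 2" using r by auto
        then have "4 * L \<le> m r" unfolding m_def using A0 by (simp add: field_simps)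
        then show ?thesis by simp
      qed
      finally show "2 powr m r * measure_pmf.expectation (colg a r) (\<lambda>col. (1/2::real) ^ card (set col)) \<le> exp (- 4 * L)" .
    qed
    also have "\<dots> = real (card {s0..t}) * exp (- 4 * L)" by simp
    also have "\<dots> \<le> real t * exp (- 4 * L)"
    proof (rule mult_right_mono)
      have "card {s0..t} \<le> t" using s03 by simp
      then show "real (card {s0..t}) \<le> real t" by linarith
    qed simp
    also have "\<dots> = exp (- 3 * L)" unfolding tL by (simp add: exp_add[symmetric])
    finally show ?thesis .
  qed
  define V2 where "V2 = (\<Prod>r\<in>{2..<t}. 1 + (q - 1) / \<mu> r)"
  have muK: "\<mu> (length col) \<le> real (card (set col))" if "invc col" "flag s0 m col" for col
  proof (cases "length col < s0")
    case True
    then show ?thesis unfolding \<mu>_def using conjunct2[OF inv_card[OF that(1)]] by simp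
  next
    case False
    then have "s0 \<le> length col" by simp
    then have "m (length col) \<le> real (card (set (take (length col) col)))"
      using that(2) unfolding flag_def by (meson order_refl)
    then show ?thesis unfolding \<mu>_def using False by simp
  qed
  have step4: "measure_pmf.expectation (colg a t) f \<le> real t * q * V2"
  proof -
    have "2 \<le> t" using t3 by simp
    from potential[OF a q1(1) mupos muK this order.refl]
    have P: "measure_pmf.expectation (colg a t) (\<lambda>c. if flag s0 m c then S q c else 0) *
           (\<Prod>r\<in>{t..<t}. 1 + (q - 1) / \<mu> r) \<le> real t * q * V2" unfolding V2_def .
    have "(\<Prod>r\<in>{t..<t}. 1 + (q - 1) / \<mu> r) = 1" by simp
    with P show ?thesis unfolding f_def by simp
  qed

  have step5: "V2 \<le> exp (12 * L + 5)"
  proof -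
    have pt: "(q - 1) / \<mu> r \<le> (if r < s0 then 1 / (2 * A) else 0) + (if 3 \<le> r then 4 / (real r - 2) else 0)"
      if "r \<in> {2..<t}" for r
    proof (cases "r < s0")
      case True
      have "(if 3 \<le> r then 4 / (real r - 2) else 0) \<ge> 0" by auto
      then show ?thesis using True unfolding \<mu>_def q_def by simp
    next
      case False
      then have r3: "r \<ge> 3" using s03 by simp
      have "(q - 1) / \<mu> r = 4 / (real r - 2)" unfolding \<mu>_def q_def m_def using False A0 r3 by (simp add: field_simps)
      then show ?thesis using False r3 by simp
    qed
    have "V2 \<le> (\<Prod>r\<in>{2..<t}. exp ((q - 1) / \<mu> r))"
      unfolding V2_def
    proof (rule prod_mono)
      fix r assume "r \<in> {2..<t}"
      have "0 \<le> (q - 1) / \<mu> r" using q1 mupos[of r] by simp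
      then show "0 \<le> 1 + (q - 1) / \<mu> r \<and> 1 + (q - 1) / \<mu> r \<le> exp ((q - 1) / \<mu> r)"
        using exp_ge_add_one_self[of "(q - 1) / \<mu> r"] by linarith
    qed
    also have "\<dots> = exp (\<Sum>r\<in>{2..<t}. (q - 1) / \<mu> r)" by (simp add: exp_sum)
    also have "(\<Sum>r\<in>{2..<t}. (q - 1) / \<mu> r) \<le>
        (\<Sum>r\<in>{2..<t}. (if r < s0 then 1 / (2 * A) else 0)) + (\<Sum>r\<in>{2..<t}. (if 3 \<le> r then 4 / (real r - 2) else 0))"
      unfolding sum.distrib[symmetric] by (rule sum_mono) (rule pt)
    also have "(\<Sum>r\<in>{2..<t}. (if r < s0 then 1 / (2 * A) else 0)) \<le> 8 * L + 1"
    proof -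
      have "(\<Sum>r\<in>{2..<t}. (if r < s0 then 1 / (2 * A) else 0)) = (\<Sum>r\<in>{2..<t} \<inter> {..<s0}. 1 / (2 * A))"
        by (subst sum.inter_restrict) auto
      also have "\<dots> = real (card ({2..<t} \<inter> {..<s0})) * (1 / (2 * A))" by simp
      also have "\<dots> \<le> real s0 * (1 / (2 * A))"
      proof (rule mult_right_mono)
        have "card ({2..<t} \<inter> {..<s0}) \<le> card {..<s0}" by (rule card_mono) auto
        then show "real (card ({2..<t} \<inter> {..<s0})) \<le> real s0" by simp
      qed (use A0 in simp)
      also have "\<dots> \<le> (16 * L * A + 4) * (1 / (2 * A))"
        by (rule mult_right_mono[OF s0le]) (use A0 in simp)
      also have "\<dots> = 8 * L + 2 / A" using A0 by (simp add: field_simps)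
      also have "\<dots> \<le> 8 * L + 1" using A0 by (simp add: field_simps)
      finally show ?thesis .
    qed
    also have "(\<Sum>r\<in>{2..<t}. (if 3 \<le> r then 4 / (real r - 2) else 0)) \<le> 4 + 4 * L"
    proof -
      have "{2..<t} = insert 2 {3..<t}" using t3 by auto
      then have "(\<Sum>r\<in>{2..<t}. (if 3 \<le> r then 4 / (real r - 2) else 0)) = (\<Sum>r\<in>{3..<t}. 4 * (1 / (real r - 2)))"
        by simp
      also have "\<dots> = 4 * (\<Sum>r\<in>{3..<t}. 1 / (real r - 2))" by (simp add: sum_distrib_left)
      also have "\<dots> \<le> 4 * (1 + L)" using harm_bound[OF t3] unfolding L_def by simp
      finally show ?thesis by simp
    qed
    finally show ?thesis by (simp add: add.commute)
  qed

  have step6: "T \<ge> exp (20 * L)"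
  proof -
    have x: "0 \<le> 1 / A" "1 / A \<le> 1 / 2" using A0 by (auto simp: field_simps)
    have "1 / A - (1 / A)^2 \<le> ln q" unfolding q_def using ln_one_plus_pos_lower_bound[of "1/A"] x by simp
    moreover have "1 / A - (1 / A)^2 \<ge> 1 / (2 * A)"
    proof -
      have "(1 / A)^2 = (1/A) * (1/A)" by (simp add: power2_eq_square)
      also have "\<dots> \<le> (1/A) * (1/2)" using x by (intro mult_left_mono) auto
      finally show ?thesis by simp
    qed
    ultimately have lq: "1 / (2 * A) \<le> ln q" by linarith
    have "20 * L = 40 * L * A * (1 / (2 * A))" using A0 by (simp add: field_simps)
    also have "\<dots> \<le> 40 * L * A * ln q" using L0 A0 lq by (intro mult_left_mono) auto
    finally have "exp (20 * L) \<le> exp (40 * L * A * ln q)" by simp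
    also have "\<dots> = T" unfolding T_def powr_def using q1 by (simp add: mult.commute)
    finally show ?thesis .
  qed
  have Ef0: "measure_pmf.expectation (colg a t) f \<ge> 0"
    by (rule Bochner_Integration.integral_nonneg) (use fnn in auto)
  have V2nn: "V2 \<ge> 0" unfolding V2_def
    by (intro prod_nonneg) (use q1 mupos in \<open>auto intro!: add_nonneg_nonneg divide_nonneg_pos\<close>)
  have "measure_pmf.expectation (colg a t) f / T \<le> real t * q * V2 / exp (20 * L)"
  proof -
    have "measure_pmf.expectation (colg a t) f / T \<le> measure_pmf.expectation (colg a t) f / exp (20 * L)"
      using Ef0 step6 Tpos by (intro divide_left_mono) auto
    also have "\<dots> \<le> real t * q * V2 / exp (20 * L)"
      using step4 by (intro divide_right_mono) auto
    finally show ?thesis .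
  qed
  also have "\<dots> \<le> exp L * 2 * exp (12 * L + 5) / exp (20 * L)"
  proof (intro divide_right_mono mult_mono)
    show "real t \<le> exp L" using tL by simp
  qed (use q1 step5 V2nn tpos tL in auto)
  also have "\<dots> = 2 * exp (5 - 7 * L)"
  proof -
    have e1: "exp L * 2 * exp (12 * L + 5) = 2 * exp (13 * L + 5)" by (simp add: exp_add[symmetric] algebra_simps)
    have e2: "exp (13 * L + 5) / exp (20 * L) = exp (5 - 7 * L)" by (simp add: exp_diff[symmetric] algebra_simps)
    show ?thesis by (simp only: e1 times_divide_eq_right[symmetric] e2)
  qed
  also have "\<dots> \<le> exp (- 3 * L)"
  proof -
    have "2 \<le> exp (4 * L - 5)"
    proof -
      have "1 + (4 * L - 5) \<le> exp (4 * L - 5)" by (rule exp_ge_add_one_self)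
      then show ?thesis using L0 by linarith
    qed
    then have "2 * exp (5 - 7 * L) \<le> exp (4 * L - 5) * exp (5 - 7 * L)" by (intro mult_right_mono) auto
    also have "\<dots> = exp (- 3 * L)" by (simp add: exp_add[symmetric])
    finally show ?thesis .
  qed
  finally have last: "measure_pmf.expectation (colg a t) f / T \<le> exp (- 3 * L)" .
  show ?thesis
    using step1 step2 step3 last unfolding L_def by linarith
qed




lemma telesc:
  assumes "k \<ge> 1"
  shows "(\<Sum>t\<in>{Suc k..k + j}. 1 / (real t * (real t - 1))) = 1 / real k - 1 / real (k + j)"
proof (induction j)
  case 0 then show ?case by simp
next
  case (Suc j)
  have e: "{Suc k..k + Suc j} = insert (Suc (k + j)) {Suc k..k + j}" by auto
  have "(\<Sum>t\<in>{Suc k..k + Suc j}. 1 / (real t * (real t - 1)))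
      = 1 / (real (Suc (k + j)) * (real (Suc (k + j)) - 1)) + (\<Sum>t\<in>{Suc k..k + j}. 1 / (real t * (real t - 1)))"
    unfolding e by (rule sum.insert) auto
  also have "\<dots> = 1 / (real (Suc (k + j)) * (real (Suc (k + j)) - 1)) + (1 / real k - 1 / real (k + j))"
    using Suc.IH by simp
  also have "\<dots> = 1 / real k - 1 / real (k + Suc j)"
  proof -
    define x where "x = real (k + j)"
    have x1: "x \<ge> 1" unfolding x_def using assms by simp
    have nz: "x \<noteq> 0" "x + 1 \<noteq> 0" using x1 by linarith+
    have h: "1 / ((x + 1) * x) = 1 / x - 1 / (x + 1)" using nz by (simp add: field_simps)
    have "1 / (real (Suc (k + j)) * (real (Suc (k + j)) - 1)) + (1 / real k - 1 / real (k + j))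
        = 1 / ((x + 1) * x) + (1 / real k - 1 / x)" unfolding x_def by simp
    also have "\<dots> = 1 / real k - 1 / (x + 1)" unfolding h by simp
    also have "\<dots> = 1 / real k - 1 / real (k + Suc j)" unfolding x_def by simp
    finally show ?thesis .
  qed
  finally show ?case .
qed

lemma telesc_le:
  assumes "t0 \<ge> 2"
  shows "(\<Sum>t\<in>{t0..n}. 1 / (real t * (real t - 1))) \<le> 1 / (real t0 - 1)"
proof (cases "n \<ge> t0")
  case True
  define k where "k = t0 - 1"
  define j where "j = n - k"
  have e: "{t0..n} = {Suc k..k + j}" "real t0 - 1 = real k" unfolding k_def j_def using assms True by auto
  have "(\<Sum>t\<in>{t0..n}. 1 / (real t * (real t - 1))) = 1 / real k - 1 / real (k + j)"
    unfolding e(1) by (rule telesc) (use assms k_def in simp)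
  also have "\<dots> \<le> 1 / real k" by simp
  finally show ?thesis unfolding e(2) .
next
  case False
  then have "{t0..n} = {}" by auto
  then show ?thesis using assms by simp
qed

lemma bad_t2:
  assumes a: "a > 0" and K: "ln (real t) \<ge> max 2 (2 powr (1 / a))"
  shows "measure_pmf.prob (colg a t) {col. \<exists>c\<in>set col. 40 * (ln (real t) powr (a + 1)) < real (cnt c col)}
           \<le> 2 / (real t * (real t - 1))"
proof -
  have L2: "ln (real t) \<ge> 2" using K by simp
  have tpos: "real t > 0" using L2 by (cases "t = 0") auto
  have "2 = (2 powr (1 / a)) powr a" using a by (simp add: powr_powr)
  also have "\<dots> \<le> ln (real t) powr a" using K a by (intro powr_mono2) auto
  finally have A2: "ln (real t) powr a \<ge> 2" .
  have t1: "real t > 1"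
  proof -
    have "ln (real t) > 0" using L2 by linarith
    then show ?thesis using ln_gt_zero_iff[OF tpos] by simp
  qed
  have "exp (- 3 * ln (real t)) = 1 / real t ^ 3"
  proof -
    have "exp (3 * ln (real t)) = real t powr 3" using tpos by (simp add: powr_def)
    also have "\<dots> = real t ^ 3" using powr_realpow[of "real t" 3] tpos by simp
    finally have "exp (3 * ln (real t)) = real t ^ 3" .
    then show ?thesis by (simp add: exp_minus field_simps)
  qed
  also have "\<dots> \<le> 1 / (real t * (real t - 1))"
  proof (rule divide_left_mono)
    have "real t \<le> real t * real t" using t1 by simp
    then have "real t - 1 \<le> real t * real t" by linarith
    then have "real t * (real t - 1) \<le> real t * (real t * real t)" using t1 by (intro mult_left_mono) auto
    then show "real t * (real t - 1) \<le> real t ^ 3" by (simp add: power3_eq_cube)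
  qed (use t1 in auto)
  finally have "2 * exp (- 3 * ln (real t)) \<le> 2 / (real t * (real t - 1))" by simp
  then show ?thesis using bad_t[OF a L2 A2] by linarith
qed




lemma asy1: "a > 1 \<Longrightarrow> eventually (\<lambda>n::nat. ln (real n) powr (a+1) \<le> real n) at_top"
  by real_asymp
lemma asy2: "a > 1 \<Longrightarrow> ((\<lambda>n::nat. 1 - 2 / (ln (real n) powr (a+1) - 1)) \<longlongrightarrow> 1) at_top"
  by real_asymp
lemma asy3: "a > 1 \<Longrightarrow> filterlim (\<lambda>n::nat. ln (real n) powr (a+1)) at_top at_top"
  by real_asymp

definition Bad :: "real \<Rightarrow> nat \<Rightarrow> nat list \<Rightarrow> bool" where
  "Bad a t col \<longleftrightarrow> (\<exists>c\<in>set col. 40 * (ln (real t) powr (a + 1)) < real (cnt c col))"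

definition Q :: "real \<Rightarrow> nat \<Rightarrow> nat list \<Rightarrow> bool" where
  "Q a n col \<longleftrightarrow> (\<forall>c \<in> set col. real (comm_size_at col n c) \<le> 40 * ln (real n) powr (a + 1))
       \<and> (\<forall>t. ln (real n) powr (a + 1) \<le> real t \<and> t \<le> n \<longrightarrow>
            (\<forall>c \<in> set (take t col). real (comm_size_at col t c) \<le> 40 * ln (real t) powr (a + 1)))"

lemma core:
  assumes a: "a > 1" and n2: "n \<ge> 2" and ln: "ln (real n) powr (a + 1) \<le> real n"
    and lK: "exp (max 2 (2 powr (1 / a))) + 2 \<le> ln (real n) powr (a + 1)"
  shows "1 - 2 / (ln (real n) powr (a + 1) - 1) \<le> measure_pmf.prob (colg a n) {col. Q a n col}"
proof -
  define l where "l = ln (real n) powr (a + 1)"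
  define K0 where "K0 = max 2 (2 powr (1 / a))"
  define t0 where "t0 = nat \<lceil>l\<rceil>"
  define f where "f = (\<lambda>col. \<Sum>t\<in>{t0..n}. indicator {col. Bad a t (take t col)} col :: real)"
  have l2: "l \<ge> 2" using lK unfolding l_def by (smt (verit) exp_gt_zero)
  have t0l: "real t0 \<ge> l" unfolding t0_def by linarith
  have t02: "t0 \<ge> 2" using t0l l2 by linarith
  have t0n: "t0 \<le> n" unfolding t0_def using ln l_def by (simp add: nat_le_iff ceiling_le_iff)
  have ge: "t0 \<le> t" if "l \<le> real t" for t unfolding t0_def using that by (simp add: nat_le_iff ceiling_le_iff)
  have int: "integrable (measure_pmf (colg a n)) h" for h :: "nat list \<Rightarrow> real"
    by (rule integrable_measure_pmf_finite[OF finite_colg])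
  have P1: "measure_pmf.prob (colg a n) {col. \<not> Q a n col} \<le> measure_pmf.expectation (colg a n) f"
  proof (rule prob_le_exp[OF finite_colg])
    fix col show "f col \<ge> 0" unfolding f_def by (intro sum_nonneg) auto
  next
    fix col assume col: "col \<in> set_pmf (colg a n)" and nq: "\<not> Q a n col"
    have lc: "length col = n" using colg_support[OF col] n2 by auto
    have "\<exists>t\<in>{t0..n}. Bad a t (take t col)"
    proof (cases "\<forall>c \<in> set col. real (comm_size_at col n c) \<le> 40 * ln (real n) powr (a + 1)")
      case True
      then obtain t c where t: "l \<le> real t" "t \<le> n" "c \<in> set (take t col)"
          "\<not> real (comm_size_at col t c) \<le> 40 * ln (real t) powr (a + 1)"
        using nq unfolding Q_def l_def by blast
      have "Bad a t (take t col)" unfolding Bad_def using t(3,4) unfolding comm_size_at_def cnt_def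
        by (intro bexI[of _ c]) (simp_all add: not_le)
      then show ?thesis using t ge by auto
    next
      case False
      then obtain c where c: "c \<in> set col" "\<not> real (comm_size_at col n c) \<le> 40 * ln (real n) powr (a + 1)"
        by blast
      have "Bad a n (take n col)" unfolding Bad_def using c lc unfolding comm_size_at_def cnt_def
        by (intro bexI[of _ c]) (simp_all add: not_le)
      then show ?thesis using t0n by auto
    qed
    then obtain t where t: "t \<in> {t0..n}" "Bad a t (take t col)" by blast
    have "1 = indicator {col. Bad a t (take t col)} col" using t by simp
    also have "\<dots> \<le> f col" unfolding f_def
      by (rule member_le_sum[where f = "\<lambda>t. indicator {col. Bad a t (take t col)} col :: real"]) (use t in auto)
    finally show "f col \<ge> 1" .
  qed
  have P2: "measure_pmf.expectation (colg a n) f \<le> 2 / (l - 1)"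
  proof -
    have "measure_pmf.expectation (colg a n) f
        = (\<Sum>t\<in>{t0..n}. measure_pmf.expectation (colg a n) (indicator {col. Bad a t (take t col)}))"
      unfolding f_def by (rule Bochner_Integration.integral_sum) (rule int)
    also have "\<dots> = (\<Sum>t\<in>{t0..n}. measure_pmf.prob (colg a t) {col. Bad a t col})"
    proof (rule sum.cong[OF refl])
      fix t assume t: "t \<in> {t0..n}"
      have "measure_pmf.prob (colg a t) {col. Bad a t col} = measure_pmf.prob (map_pmf (take t) (colg a n)) {col. Bad a t col}"
        using take_colg[of t n a] t t02 by simp
      also have "\<dots> = measure_pmf.prob (colg a n) {col. Bad a t (take t col)}"
        by (simp add: vimage_def)
      finally show "measure_pmf.expectation (colg a n) (indicator {col. Bad a t (take t col)})
          = measure_pmf.prob (colg a t) {col. Bad a t col}" by simp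
    qed
    also have "\<dots> \<le> (\<Sum>t\<in>{t0..n}. 2 * (1 / (real t * (real t - 1))))"
    proof (rule sum_mono)
      fix t assume t: "t \<in> {t0..n}"
      then have tl: "real t \<ge> l" using t0l by auto
      have "ln (real t) \<ge> K0"
      proof -
        have "exp K0 \<le> real t" using tl lK unfolding l_def K0_def by linarith
        moreover have "exp K0 > 0" by simp
        ultimately have tp: "real t > 0" by linarith
        have "ln (exp K0) \<le> ln (real t)" using tp \<open>exp K0 \<le> real t\<close> by (subst ln_le_cancel_iff) auto
        then show ?thesis by simp
      qed
      then have "measure_pmf.prob (colg a t) {col. Bad a t col} \<le> 2 / (real t * (real t - 1))"
        using bad_t2[of a t] a unfolding Bad_def K0_def by simp
      then show "measure_pmf.prob (colg a t) {col. Bad a t col} \<le> 2 * (1 / (real t * (real t - 1)))" by simp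
    qed
    also have "\<dots> = 2 * (\<Sum>t\<in>{t0..n}. 1 / (real t * (real t - 1)))" by (simp add: sum_distrib_left)
    also have "\<dots> \<le> 2 * (1 / (real t0 - 1))" using telesc_le[OF t02, of n] by linarith
    also have "\<dots> \<le> 2 / (l - 1)" using t0l l2 by (simp add: frac_le)
    finally show ?thesis .
  qed
  have "measure_pmf.prob (colg a n) {col. Q a n col} = 1 - measure_pmf.prob (colg a n) {col. \<not> Q a n col}"
  proof -
    have "{col. \<not> Q a n col} = space (measure_pmf (colg a n)) - {col. Q a n col}" by auto
    moreover have "measure_pmf.prob (colg a n) (space (measure_pmf (colg a n)) - {col. Q a n col}) = 1 - measure_pmf.prob (colg a n) {col. Q a n col}"
      by (rule measure_pmf.prob_compl) simp
    ultimately show ?thesis by simp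
  qed
  then show ?thesis using P1 P2 unfolding l_def by linarith
qed


theorem lemma3:
  fixes a :: real and d :: nat
  assumes "a > 1" and "d \<ge> 4"
  shows "\<exists>C>0. (\<lambda>n. measure_pmf.prob (sm_graph a d n)
     {s. (\<forall>c \<in> set (fst s). real (comm_size_at (fst s) n c) \<le> C * ln (real n) powr (a + 1))
       \<and> (\<forall>t. ln (real n) powr (a + 1) \<le> real t \<and> t \<le> n \<longrightarrow>
            (\<forall>c \<in> set (take t (fst s)). real (comm_size_at (fst s) t c) \<le> C * ln (real t) powr (a + 1)))})
     \<longlonglongrightarrow> 1"
proof (intro exI[of _ 40] conjI)
  show "(40::real) > 0" by simp
  have conv: "measure_pmf.prob (sm_graph a d n)
     {s. (\<forall>c \<in> set (fst s). real (comm_size_at (fst s) n c) \<le> 40 * ln (real n) powr (a + 1))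
       \<and> (\<forall>t. ln (real n) powr (a + 1) \<le> real t \<and> t \<le> n \<longrightarrow>
            (\<forall>c \<in> set (take t (fst s)). real (comm_size_at (fst s) t c) \<le> 40 * ln (real t) powr (a + 1)))}
     = measure_pmf.prob (colg a n) {col. Q a n col}" for n
  proof -
    have "{s. (\<forall>c \<in> set (fst s). real (comm_size_at (fst s) n c) \<le> 40 * ln (real n) powr (a + 1))
       \<and> (\<forall>t. ln (real n) powr (a + 1) \<le> real t \<and> t \<le> n \<longrightarrow>
            (\<forall>c \<in> set (take t (fst s)). real (comm_size_at (fst s) t c) \<le> 40 * ln (real t) powr (a + 1)))}
       = fst -` {col. Q a n col}" unfolding Q_def by auto
    then show ?thesis using map_fst_graph[of a d n] by (metis measure_map_pmf)
  qed
  define K0 where "K0 = max 2 (2 powr (1 / a))"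
  have ev: "eventually (\<lambda>n. n \<ge> 2 \<and> ln (real n) powr (a + 1) \<le> real n \<and> exp K0 + 2 \<le> ln (real n) powr (a + 1)) at_top"
  proof -
    have "eventually (\<lambda>n::nat. exp K0 + 2 \<le> ln (real n) powr (a + 1)) at_top"
      using asy3[OF assms(1)] unfolding filterlim_at_top by blast
    then show ?thesis using asy1[OF assms(1)] eventually_ge_at_top[of "2::nat"]
      by eventually_elim auto
  qed
  show "(\<lambda>n. measure_pmf.prob (sm_graph a d n)
     {s. (\<forall>c \<in> set (fst s). real (comm_size_at (fst s) n c) \<le> 40 * ln (real n) powr (a + 1))
       \<and> (\<forall>t. ln (real n) powr (a + 1) \<le> real t \<and> t \<le> n \<longrightarrow>
            (\<forall>c \<in> set (take t (fst s)). real (comm_size_at (fst s) t c) \<le> 40 * ln (real t) powr (a + 1)))})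
     \<longlonglongrightarrow> 1"
    unfolding conv
  proof (rule tendsto_sandwich[OF _ _ asy2[OF assms(1)] tendsto_const])
    show "eventually (\<lambda>n. 1 - 2 / (ln (real n) powr (a + 1) - 1) \<le> measure_pmf.prob (colg a n) {col. Q a n col}) at_top"
      using ev by eventually_elim (use core[OF assms(1)] K0_def in auto)
    show "eventually (\<lambda>n. measure_pmf.prob (colg a n) {col. Q a n col} \<le> 1) at_top"
      by simp
  qed
qed


end
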